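(* Let $n\ge2$, $\xi_n=\frac{n+1}{n-1}$, $\rho\in\mathbb{C}\setminus\{-\xi_n,-1,1,\xi_n\}$, $z_k\in\mathbb{C}\setminus\{0\}$, and let $\mu_k\in\mathbb{C}$ satisfy $z_k=\exp(i\mu_k)$. Then: (i) $z_k$ is a type-1 zero of $p_{2n}(\rho,z)$ iff $z_k\neq\pm1$ (i.e. $\mu_k\notin\pi\mathbb{Z}$) and $$\sin\frac{\mu_k(n+1)}{2}-\rho\sin\frac{\mu_k(n-1)}{2}=0.$$ In this case the corresponding type-1 eigenvalue is $$\lambda_k=\frac{1-\rho^2}{1-2\rho\cos\mu_k+\rho^2}=-\frac{\sin(n\mu_k)}{\sin\mu_k},$$ and the vector $\mathbf{y}_k$ with entries $y_{kj}=\sin\left[\mu_k\left(j-\frac{n-1}{2}\right)\right]$, $j=0,1,\dots,n-1$, is an eigenvector of $K_n(\rho)$ for $\lambda_k$. (ii) $z_k$ is a type-2 zero of $p_{2n}(\rho,z)$ iff $z_k\neq\pm1$ (i.e. $\mu_k\notin\pi\mathbb{Z}$) and $$\cos\frac{\mu_k(n+1)}{2}-\rho\cos\frac{\mu_k(n-1)}{2}=0.$$ In this case the corresponding type-2 eigenvalue is $$\lambda_k=\frac{1-\rho^2}{1-2\rho\cos\mu_k+\rho^2}=\frac{\sin(n\mu_k)}{\sin\mu_k},$$ and the vector $\mathbf{y}_k$ with entries $y_{kj}=\cos\left[\mu_k\left(j-\frac{n-1}{2}\right)\right]$, $j=0,1,\dots,n-1$, is an eigenvector of $K_n(\rho)$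 for $\lambda_k$.
   Context: $K_n(\rho)=\left[\rho^{|j-k|}\right]_{j,k=1}^n$ (with $\rho^0=1$). $p_{2n}(\rho,z)=z^{2n}+(1+\rho^2)\sum_{k=1}^{n-1}z^{2k}-2\rho\sum_{k=0}^{n-1}z^{2k+1}+1$; $s_{n+1}(\rho,z)=z^{n+1}-\rho z^n+\rho z-1$; $c_{n+1}(\rho,z)=z^{n+1}-\rho z^n-\rho z+1$. For such $\rho$, a zero $z$ of $p_{2n}(\rho,\cdot)$ is a type-1 zero if $s_{n+1}(\rho,z)=s_{n+1}(\rho,z^{-1})=0$ and a type-2 zero if $c_{n+1}(\rho,z)=c_{n+1}(\rho,z^{-1})=0$; every zero is of exactly one type. The eigenvalue corresponding to a zero $z$ is $\frac{z(1-\rho^2)}{(z-\rho)(1-\rho z)}$, and it is called type-1 or type-2 according to the type of $z$. *)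

theory Defs
  imports Complex_Main "Jordan_Normal_Form.Char_Poly"
begin

text \<open>The Kac-Murdock-Szego matrix K_n(rho) = [rho^|j-k|], rows/columns indexed 0..n-1
  (a shift of the paper's 1..n indexing; rho^0 = 1).\<close>
definition KMS :: "nat \<Rightarrow> complex \<Rightarrow> complex mat" where
  "KMS n \<rho> = mat n n (\<lambda>(j, k). \<rho> ^ (if j \<le> k then k - j else j - k))"

definition p2n :: "nat \<Rightarrow> complex \<Rightarrow> complex \<Rightarrow> complex" where
  "p2n n \<rho> z = z ^ (2*n) + (1 + \<rho>^2) * (\<Sum>k=1..n-1. z ^ (2*k))
     - 2 * \<rho> * (\<Sum>k=0..n-1. z ^ (2*k+1)) + 1"

definition s_poly :: "nat \<Rightarrow> complex \<Rightarrow> complex \<Rightarrow> complex" where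
  "s_poly n \<rho> z = z ^ (n+1) - \<rho> * z ^ n + \<rho> * z - 1"

definition c_poly :: "nat \<Rightarrow> complex \<Rightarrow> complex \<Rightarrow> complex" where
  "c_poly n \<rho> z = z ^ (n+1) - \<rho> * z ^ n - \<rho> * z + 1"

definition type1_zero :: "nat \<Rightarrow> complex \<Rightarrow> complex \<Rightarrow> bool" where
  "type1_zero n \<rho> z \<longleftrightarrow> p2n n \<rho> z = 0 \<and> s_poly n \<rho> z = 0 \<and> s_poly n \<rho> (inverse z) = 0"

definition type2_zero :: "nat \<Rightarrow> complex \<Rightarrow> complex \<Rightarrow> bool" where
  "type2_zero n \<rho> z \<longleftrightarrow> p2n n \<rho> z = 0 \<and> c_poly n \<rho> z = 0 \<and> c_poly n \<rho> (inverse z) = 0"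

definition zero_eigval :: "complex \<Rightarrow> complex \<Rightarrow> complex" where
  "zero_eigval \<rho> z = z * (1 - \<rho>^2) / ((z - \<rho>) * (1 - \<rho> * z))"

end

theory Submission
  imports Defs
begin

lemma geo_left:
  fixes t r :: complex
  shows "(t - r) * (\<Sum>k<j. r^(j-k) * t^k) = r * (t^j - r^j)"
proof (induction j)
  case 0 then show ?case by simp
next
  case (Suc j)
  define S where "S = (\<Sum>k<j. r^(j-k) * t^k)"
  have e: "(\<Sum>k<Suc j. r^(Suc j-k) * t^k) = r * S + r * t^j"
    unfolding S_def by (simp add: sum_distrib_left Suc_diff_le mult.assoc)
  have IH: "(t - r) * S = r * (t^j - r^j)" using Suc unfolding S_def .
  have "(t - r) * (r * S + r * t^j) = r * ((t - r) * S) + (t-r) * r * t^j"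
    by (simp add: algebra_simps)
  also have "\<dots> = r * (t^Suc j - r^Suc j)" unfolding IH by (simp add: algebra_simps)
  finally show ?case unfolding e .
qed

lemma geo_right:
  fixes t r :: complex
  assumes "j \<le> n"
  shows "(1 - r*t) * (\<Sum>k\<in>{j..<n}. r^(k-j) * t^k) = t^j - r^(n-j) * t^n"
  using assms
proof (induction n)
  case 0 then show ?case by simp
next
  case (Suc n)
  show ?case
  proof (cases "j = Suc n")
    case True then show ?thesis by simp
  next
    case False
    then have jn: "j \<le> n" using Suc by simp
    define S where "S = (\<Sum>k\<in>{j..<n}. r^(k-j) * t^k)"
    have e: "(\<Sum>k\<in>{j..<Suc n}. r^(k-j) * t^k) = S + r^(n-j)*t^n"
      using jn unfolding S_def by simp
    have p: "r^(Suc n - j) = r * r^(n-j)" using jn by (simp add: Suc_diff_le)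
    have IH: "(1 - r*t) * S = t^j - r^(n-j) * t^n" using Suc.IH[OF jn] unfolding S_def .
    have "(1 - r*t) * (S + r^(n-j)*t^n) = (1 - r*t) * S + (1-r*t) * r^(n-j)*t^n"
      by (simp add: algebra_simps)
    also have "\<dots> = t^j - r^(Suc n-j) * t^Suc n" unfolding IH p by (simp add: algebra_simps)
    finally show ?thesis unfolding e .
  qed
qed

definition Lf :: "complex \<Rightarrow> complex \<Rightarrow> complex" where
  "Lf r t = t * (1 - r^2) / ((t - r) * (1 - r * t))"

lemma row_sum:
  fixes t r :: complex
  assumes "j < n" "t \<noteq> r" "1 - r*t \<noteq> 0"
  shows "(\<Sum>k<n. r^(if j \<le> k then k-j else j-k) * t^k)
     = Lf r t * t^j - r^(j+1)/(t-r) - r^(n-j)*t^n/(1-r*t)"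
proof -
  have split: "{..<n} = {..<j} \<union> {j..<n}" using assms by auto
  have "(\<Sum>k<n. r^(if j \<le> k then k-j else j-k) * t^k)
      = (\<Sum>k<j. r^(if j \<le> k then k-j else j-k) * t^k) + (\<Sum>k\<in>{j..<n}. r^(if j \<le> k then k-j else j-k) * t^k)"
    unfolding split by (rule sum.union_disjoint) auto
  also have "\<dots> = (\<Sum>k<j. r^(j-k) * t^k) + (\<Sum>k\<in>{j..<n}. r^(k-j) * t^k)"
    by (intro arg_cong2[where f="(+)"] sum.cong) auto
  also have "\<dots> = r * (t^j - r^j) / (t - r) + (t^j - r^(n-j) * t^n) / (1 - r*t)"
  proof -
    have a: "t - r \<noteq> 0" using assms by simp
    show ?thesis using geo_left[of t r j] geo_right[of j n r t] assms a
      by (metis (no_types, lifting) less_imp_le_nat nonzero_mult_div_cancel_left)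
  qed
  also have "\<dots> = Lf r t * t^j - r^(j+1)/(t-r) - r^(n-j)*t^n/(1-r*t)"
  proof -
    have a: "t - r \<noteq> 0" "1 - r*t \<noteq> 0" using assms by auto
    have "Lf r t = r/(t-r) + 1/(1-r*t)" unfolding Lf_def using a
      by (simp add: divide_simps) (simp add: algebra_simps power2_eq_square)
    then show ?thesis using a by (simp add: diff_divide_distrib add_divide_distrib algebra_simps)
  qed
  finally show ?thesis .
qed

lemma Lf_inv: assumes z0: "z \<noteq> 0" shows "Lf r (inverse z) = Lf r z"
proof -
  have d: "(inverse z - r) * (1 - r*inverse z) = ((z - r) * (1 - r*z)) / z^2"
    using z0 by (simp add: field_simps power2_eq_square)
  show ?thesis
  proof (cases "(z - r) * (1 - r*z) = 0")
    case True then show ?thesis unfolding Lf_def d by simp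
  next
    case False
    define D where "D = (z - r) * (1 - r*z)"
    have "inverse z * (1 - r^2) / (D / z^2) = z * (1 - r^2) / D"
      using z0 by (simp add: divide_simps power2_eq_square)
    then show ?thesis unfolding Lf_def d D_def[symmetric] by simp
  qed
qed

lemma eig_general:
  fixes z r e C :: complex
  assumes n1: "n \<ge> 1" and z0: "z \<noteq> 0" and zr: "z \<noteq> r" and rz: "1 - r*z \<noteq> 0"
    and hz: "z^n * (z - r) = e * (1 - r*z)" and ee: "e * e = 1"
  shows "KMS n r *\<^sub>v vec n (\<lambda>j. C * (z^j - e * z^(n-1) * (inverse z)^j))
       = Lf r z \<cdot>\<^sub>v vec n (\<lambda>j. C * (z^j - e * z^(n-1) * (inverse z)^j))"
proof (rule eq_vecI)
  fix j assume j: "j < dim_vec (Lf r z \<cdot>\<^sub>v vec n (\<lambda>j. C * (z^j - e * z^(n-1) * (inverse z)^j)))"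
  then have jn: "j < n" by simp
  define iz where "iz = inverse z"
  have izr: "iz \<noteq> r" using rz z0 unfolding iz_def by (auto simp: field_simps)
  have rizr: "1 - r*iz \<noteq> 0" using zr z0 unfolding iz_def by (auto simp: field_simps)
  define Q where "Q = (\<lambda>t. (\<Sum>k<n. r^(if j \<le> k then k-j else j-k) * t^k))"
  have "(KMS n r *\<^sub>v vec n (\<lambda>j. C * (z^j - e * z^(n-1) * iz^j))) $ j
     = (\<Sum>k<n. r^(if j \<le> k then k-j else j-k) * (C * (z^k - e * z^(n-1) * iz^k)))"
    using jn unfolding KMS_def by (simp add: scalar_prod_def row_def lessThan_atLeast0)
  also have "\<dots> = C * (Q z - e * z^(n-1) * Q iz)"
    unfolding Q_def by (simp add: sum_distrib_left sum_subtractf algebra_simps)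
  also have "\<dots> = C * (Lf r z * (z^j - e * z^(n-1) * iz^j)
      - r^(j+1) * (1/(z-r) - e * z^(n-1) / (iz - r))
      - r^(n-j) * (z^n/(1-r*z) - e * z^(n-1) * iz^n/(1-r*iz)))"
    unfolding Q_def row_sum[OF jn zr rz] row_sum[OF jn izr rizr] Lf_inv[OF z0, folded iz_def]
    by (simp add: algebra_simps diff_divide_distrib)
  also have "\<dots> = C * (Lf r z * (z^j - e * z^(n-1) * iz^j))"
  proof -
    define P where "P = z^n"
    have zn1: "z^(n-1) * z = P" unfolding P_def using n1 by (cases n) auto
    have izn: "iz^n = inverse P" unfolding P_def iz_def by (simp add: power_inverse)
    have hP: "P * (z - r) = e * (1 - r*z)" using hz unfolding P_def .
    have b1: "1/(z-r) - e * z^(n-1) / (iz - r) = 0"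
    proof -
      have "e * z^(n-1) / (iz - r) = e * P / (1 - r*z)"
        using z0 zn1 rz unfolding iz_def by (simp add: field_simps)
      also have "\<dots> = 1/(z-r)"
      proof -
        have "e*P*(z-r) = e*(P*(z-r))" by simp
        also have "\<dots> = e*e*(1-r*z)" using hP by simp
        also have "\<dots> = 1-r*z" using ee by simp
        finally have "e*P*(z-r) = 1-r*z" .
        then show ?thesis using zr rz by (simp add: frac_eq_eq)
      qed
      finally show ?thesis by simp
    qed
    have b2: "z^n/(1-r*z) - e * z^(n-1) * iz^n/(1-r*iz) = 0"
    proof -
      have P0: "P \<noteq> 0" unfolding P_def using z0 by simp
      have "z^(n-1) = P / z" using zn1 z0 by (simp add: eq_divide_eq)
      then have "z^(n-1) * iz^n = inverse z" using izn P0 by (simp add: field_simps)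
      then have "e * z^(n-1) * iz^n/(1-r*iz) = e * inverse z / (1 - r * inverse z)"
        unfolding iz_def by (simp add: mult.assoc)
      also have "\<dots> = e / (z - r)" using z0 zr by (simp add: field_simps)
      finally have "e * z^(n-1) * iz^n/(1-r*iz) = e / (z - r)" .
      also have "\<dots> = P/(1-r*z)" using zr rz hP ee by (simp add: field_simps)
      finally show ?thesis unfolding P_def by simp
    qed
    show ?thesis using b1 b2 by simp
  qed
  also have "\<dots> = (Lf r z \<cdot>\<^sub>v vec n (\<lambda>j. C * (z^j - e * z^(n-1) * iz^j))) $ j"
    using jn by simp
  finally show "(KMS n r *\<^sub>v vec n (\<lambda>j. C * (z^j - e * z^(n-1) * (inverse z)^j))) $ j =
         (Lf r z \<cdot>\<^sub>v vec n (\<lambda>j. C * (z^j - e * z^(n-1) * (inverse z)^j))) $ j"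
    unfolding iz_def .
next
  show "dim_vec (KMS n r *\<^sub>v vec n (\<lambda>j. C * (z^j - e * z^(n-1) * (inverse z)^j))) =
    dim_vec (Lf r z \<cdot>\<^sub>v vec n (\<lambda>j. C * (z^j - e * z^(n-1) * (inverse z)^j)))"
    unfolding KMS_def by simp
qed


lemma my_euler: "exp (\<i> * z) = cos z + \<i> * sin (z::complex)"
proof -
  have c: "(\<lambda>n. (\<i> * z) ^ n /\<^sub>R fact n) = (\<lambda>n. cos_coeff n *\<^sub>R z^n + \<i> * (sin_coeff n *\<^sub>R z^n))"
  proof
    fix n :: nat
    show "(\<i> * z) ^ n /\<^sub>R fact n = cos_coeff n *\<^sub>R z^n + \<i> * (sin_coeff n *\<^sub>R z^n)"
    proof (cases "even n")
      case True
      then obtain k where k: "n = 2*k" by (elim evenE)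
      have "\<i> ^ n = (-1) ^ k" unfolding k power_mult by simp
      then show ?thesis using True unfolding cos_coeff_def sin_coeff_def
        by (simp add: scaleR_conv_of_real power_mult_distrib k field_simps)
    next
      case False
      then obtain k where k: "n = 2*k+1" by (elim oddE)
      have "\<i> ^ n = \<i> * (-1) ^ k" unfolding k power_add power_mult by simp
      then show ?thesis using False unfolding cos_coeff_def sin_coeff_def
        by (simp add: scaleR_conv_of_real power_mult_distrib k field_simps)
    qed
  qed
  have "(\<lambda>n. (\<i> * z) ^ n /\<^sub>R fact n) sums exp (\<i> * z)" by (rule exp_converges)
  moreover have "(\<lambda>n. (\<i> * z) ^ n /\<^sub>R fact n) sums (cos z + \<i> * sin z)"
    unfolding c by (intro sums_add sums_mult cos_converges sin_converges)
  ultimately show ?thesis using sums_unique2 by blast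
qed

lemma my_sin_exp: "sin z = (exp(\<i> * z) - exp(-(\<i> * z))) / (2*\<i>)"
  using my_euler[of z] my_euler[of "-z"] by simp

lemma my_cos_exp: "cos z = (exp(\<i> * z) + exp(-(\<i> * z))) / 2"
  using my_euler[of z] my_euler[of "-z"] by simp

lemma wu_pow: fixes w u :: complex assumes "w*u = 1" shows "w^(a+b)*u^b = w^a"
proof -
  have "w^(a+b)*u^b = w^a*(w*u)^b" by (simp add: power_add power_mult_distrib mult.assoc)
  then show ?thesis using assms by simp
qed

lemma half_facts:
  fixes \<mu> :: complex
  shows "exp (\<i>*\<mu>/2) * exp (-(\<i>*\<mu>/2)) = 1"
    and "exp (\<i>*\<mu>) = exp (\<i>*\<mu>/2) ^ 2"
    and "exp (-(\<i>*\<mu>)) = inverse (exp (\<i>*\<mu>))"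
    and "exp (\<i>*\<mu>) * exp (-(\<i>*\<mu>/2)) = exp (\<i>*\<mu>/2)"
proof -
  show 1: "exp (\<i>*\<mu>/2) * exp (-(\<i>*\<mu>/2)) = 1" by (simp add: exp_minus)
  show 2: "exp (\<i>*\<mu>) = exp (\<i>*\<mu>/2) ^ 2"
    by (simp add: power2_eq_square exp_add[symmetric])
  show "exp (-(\<i>*\<mu>)) = inverse (exp (\<i>*\<mu>))" by (simp add: exp_minus)
  show "exp (\<i>*\<mu>) * exp (-(\<i>*\<mu>/2)) = exp (\<i>*\<mu>/2)"
    unfolding 2 using 1 by (simp add: power2_eq_square mult.assoc)
qed

lemma y_exp:
  fixes \<mu> :: complex
  assumes n1: "n \<ge> 1"
  shows "exp (\<i> * (\<mu> * (of_nat j - (of_nat n - 1) / 2)))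
           = exp (-(\<i>*\<mu>/2)) ^ (n-1) * exp (\<i>*\<mu>) ^ j"
    and "exp (-(\<i> * (\<mu> * (of_nat j - (of_nat n - 1) / 2))))
           = exp (-(\<i>*\<mu>/2)) ^ (n-1) * (exp (\<i>*\<mu>) ^ (n-1) * inverse (exp (\<i>*\<mu>)) ^ j)"
proof -
  have nm: "(of_nat n - 1 :: complex) = of_nat (n-1)" using n1 by (simp add: of_nat_diff)
  have a: "\<i> * (\<mu> * (of_nat j - (of_nat n - 1) / 2)) = of_nat j * (\<i>*\<mu>) + of_nat (n-1) * (-(\<i>*\<mu>/2))"
    unfolding nm by (simp add: algebra_simps)
  show "exp (\<i> * (\<mu> * (of_nat j - (of_nat n - 1) / 2)))
           = exp (-(\<i>*\<mu>/2)) ^ (n-1) * exp (\<i>*\<mu>) ^ j"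
    unfolding a exp_add exp_of_nat_mult by simp
  have b: "-(\<i> * (\<mu> * (of_nat j - (of_nat n - 1) / 2))) = of_nat j * (-(\<i>*\<mu>)) + of_nat (n-1) * (\<i>*\<mu>/2)"
    unfolding nm by (simp add: algebra_simps)
  have "exp (\<i>*\<mu>/2) ^ (n-1) = (exp (\<i>*\<mu>) * exp (-(\<i>*\<mu>/2))) ^ (n-1)"
    using half_facts(4) by simp
  then show "exp (-(\<i> * (\<mu> * (of_nat j - (of_nat n - 1) / 2))))
           = exp (-(\<i>*\<mu>/2)) ^ (n-1) * (exp (\<i>*\<mu>) ^ (n-1) * inverse (exp (\<i>*\<mu>)) ^ j)"
    unfolding b exp_add exp_of_nat_mult half_facts(3) by (simp add: power_mult_distrib)
qed

lemma y_sin: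
  fixes \<mu> :: complex
  assumes n1: "n \<ge> 1"
  shows "sin (\<mu> * (of_nat j - (of_nat n - 1) / 2))
    = exp (-(\<i>*\<mu>/2)) ^ (n-1) / (2*\<i>) * (exp (\<i>*\<mu>) ^ j - 1 * exp (\<i>*\<mu>) ^ (n-1) * inverse (exp (\<i>*\<mu>)) ^ j)"
  unfolding my_sin_exp y_exp[OF n1] by (simp add: field_simps)

lemma y_cos:
  fixes \<mu> :: complex
  assumes n1: "n \<ge> 1"
  shows "cos (\<mu> * (of_nat j - (of_nat n - 1) / 2))
    = exp (-(\<i>*\<mu>/2)) ^ (n-1) / 2 * (exp (\<i>*\<mu>) ^ j - (-1) * exp (\<i>*\<mu>) ^ (n-1) * inverse (exp (\<i>*\<mu>)) ^ j)"
  unfolding my_cos_exp y_exp[OF n1] by (simp add: field_simps)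

lemma cond_exp:
  fixes \<mu> \<rho> :: complex and e :: complex
  assumes n1: "n \<ge> 1"
  defines "w \<equiv> exp (\<i>*\<mu>/2)" and "u \<equiv> exp (-(\<i>*\<mu>/2))"
  shows "w^(n+1) * ((w^(n+1) - e * u^(n+1)) - \<rho> * (w^(n-1) - e * u^(n-1)))
     = exp (\<i>*\<mu>)^(n+1) - \<rho> * exp (\<i>*\<mu>)^n + e * \<rho> * exp (\<i>*\<mu>) - e"
proof -
  obtain m where n: "n = m + 1" using n1 by (metis add.commute le_add_diff_inverse)
  have wu: "w*u = 1" unfolding w_def u_def by (rule half_facts(1))
  have z: "exp (\<i>*\<mu>) = w^2" unfolding w_def by (rule half_facts(2))
  have e1: "w^(m+2) * w^(m+2) = (w^2)^(m+2)" by (simp add: power_mult[symmetric] power_add[symmetric] mult_2)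
  have e2: "w^(m+2) * u^(m+2) = 1" using wu_pow[OF wu, of 0 "m+2"] by simp
  have e3: "w^(m+2) * w^m = (w^2)^(m+1)" by (simp add: power_mult[symmetric] power_add[symmetric] mult_2)
  have e4: "w^(m+2) * u^m = w^2" using wu_pow[OF wu, of 2 m] by (simp add: add.commute)
  have "w^(m+2) * ((w^(m+2) - e * u^(m+2)) - \<rho> * (w^m - e * u^m))
     = w^(m+2) * w^(m+2) - e * (w^(m+2) * u^(m+2)) - \<rho> * (w^(m+2) * w^m) + e * \<rho> * (w^(m+2) * u^m)"
    by (simp add: algebra_simps)
  also have "\<dots> = (w^2)^(m+2) - \<rho> * (w^2)^(m+1) + e * \<rho> * w^2 - e"
    unfolding e1 e2 e3 e4 by simp
  finally show ?thesis unfolding z n by (simp add: numeral_2_eq_2)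
qed


lemma half_pow:
  fixes \<mu> :: complex
  shows "exp (\<i> * (\<mu> * of_nat k / 2)) = exp (\<i>*\<mu>/2) ^ k"
    and "exp (-(\<i> * (\<mu> * of_nat k / 2))) = exp (-(\<i>*\<mu>/2)) ^ k"
proof -
  have e1: "\<i> * (\<mu> * of_nat k / 2) = of_nat k * (\<i>*\<mu>/2)" by simp
  show "exp (\<i> * (\<mu> * of_nat k / 2)) = exp (\<i>*\<mu>/2) ^ k" unfolding e1 by (rule exp_of_nat_mult)
  have e2: "-(\<i> * (\<mu> * of_nat k / 2)) = of_nat k * (-(\<i>*\<mu>/2))" by simp
  show "exp (-(\<i> * (\<mu> * of_nat k / 2))) = exp (-(\<i>*\<mu>/2)) ^ k" unfolding e2 by (rule exp_of_nat_mult)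
qed

lemma sin_cond:
  fixes \<mu> \<rho> :: complex
  assumes n1: "n \<ge> 1"
  shows "sin (\<mu> * of_nat (n+1) / 2) - \<rho> * sin (\<mu> * of_nat (n-1) / 2) = 0
     \<longleftrightarrow> s_poly n \<rho> (exp (\<i>*\<mu>)) = 0"
proof -
  define w where "w = exp (\<i>*\<mu>/2)"
  define u where "u = exp (-(\<i>*\<mu>/2))"
  have w0: "w \<noteq> 0" unfolding w_def by simp
  have "sin (\<mu> * of_nat (n+1) / 2) - \<rho> * sin (\<mu> * of_nat (n-1) / 2)
     = ((w^(n+1) - 1 * u^(n+1)) - \<rho> * (w^(n-1) - 1 * u^(n-1))) / (2*\<i>)"
    unfolding my_sin_exp half_pow w_def u_def by (simp add: field_simps)
  also have "\<dots> = 0 \<longleftrightarrow> w^(n+1) * ((w^(n+1) - 1 * u^(n+1)) - \<rho> * (w^(n-1) - 1 * u^(n-1))) = 0"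
    using w0 by simp
  also have "\<dots> \<longleftrightarrow> s_poly n \<rho> (exp (\<i>*\<mu>)) = 0"
    unfolding w_def u_def cond_exp[OF n1] s_poly_def by (simp add: algebra_simps)
  finally show ?thesis .
qed

lemma cos_cond:
  fixes \<mu> \<rho> :: complex
  assumes n1: "n \<ge> 1"
  shows "cos (\<mu> * of_nat (n+1) / 2) - \<rho> * cos (\<mu> * of_nat (n-1) / 2) = 0
     \<longleftrightarrow> c_poly n \<rho> (exp (\<i>*\<mu>)) = 0"
proof -
  define w where "w = exp (\<i>*\<mu>/2)"
  define u where "u = exp (-(\<i>*\<mu>/2))"
  have w0: "w \<noteq> 0" unfolding w_def by simp
  have "cos (\<mu> * of_nat (n+1) / 2) - \<rho> * cos (\<mu> * of_nat (n-1) / 2)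
     = ((w^(n+1) - (-1) * u^(n+1)) - \<rho> * (w^(n-1) - (-1) * u^(n-1))) / 2"
    unfolding my_cos_exp half_pow w_def u_def by (simp add: field_simps)
  also have "\<dots> = 0 \<longleftrightarrow> w^(n+1) * ((w^(n+1) - (-1) * u^(n+1)) - \<rho> * (w^(n-1) - (-1) * u^(n-1))) = 0"
    using w0 by simp
  also have "\<dots> \<longleftrightarrow> c_poly n \<rho> (exp (\<i>*\<mu>)) = 0"
    unfolding w_def u_def cond_exp[OF n1] c_poly_def by (simp add: algebra_simps)
  finally show ?thesis .
qed

lemma s_inv: fixes z \<rho> :: complex assumes z0: "z \<noteq> 0"
  shows "s_poly n \<rho> (inverse z) = - s_poly n \<rho> z / (z^n * z)"
proof -
  define P where "P = z^n"
  have P0: "P \<noteq> 0" unfolding P_def using z0 by simp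
  have "s_poly n \<rho> (inverse z) = inverse P * inverse z - \<rho> * inverse P + \<rho> * inverse z - 1"
    unfolding s_poly_def P_def by (simp add: power_inverse)
  also have "\<dots> = - (P * z - \<rho> * P + \<rho> * z - 1) / (P * z)"
    using P0 z0 by (simp add: field_simps)
  finally show ?thesis unfolding s_poly_def P_def by simp
qed

lemma c_inv: fixes z \<rho> :: complex assumes z0: "z \<noteq> 0"
  shows "c_poly n \<rho> (inverse z) = c_poly n \<rho> z / (z^n * z)"
proof -
  define P where "P = z^n"
  have P0: "P \<noteq> 0" unfolding P_def using z0 by simp
  have "c_poly n \<rho> (inverse z) = inverse P * inverse z - \<rho> * inverse P - \<rho> * inverse z + 1"
    unfolding c_poly_def P_def by (simp add: power_inverse)
  also have "\<dots> = (P * z - \<rho> * P - \<rho> * z + 1) / (P * z)"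
    using P0 z0 by (simp add: field_simps)
  finally show ?thesis unfolding c_poly_def P_def by simp
qed

lemma sum_even: fixes z :: complex
  shows "(z^2 - 1) * (\<Sum>k=1..m. z^(2*k)) = z^(2*m+2) - z^2"
proof (induction m)
  case 0 then show ?case by (simp add: power2_eq_square)
next
  case (Suc m)
  define S where "S = (\<Sum>k=1..m. z^(2*k))"
  have "(\<Sum>k=1..Suc m. z^(2*k)) = S + z^(2*m+2)" unfolding S_def by simp
  moreover have "(z^2-1) * (S + z^(2*m+2)) = (z^2-1)*S + (z^2-1)*z^(2*m+2)" by (simp add: algebra_simps)
  moreover have "(z^2-1)*z^(2*m+2) = z^(2*Suc m+2) - z^(2*m+2)"
  proof -
    have "2*Suc m+2 = 2 + (2*m+2)" by simp
    then have "z^(2*Suc m+2) = z^2*z^(2*m+2)" by (simp only: power_add)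
    moreover have "(z^2-1)*X = z^2*X - X" for X :: complex by (simp add: left_diff_distrib)
    ultimately show ?thesis by (simp only:)
  qed
  ultimately show ?case using Suc unfolding S_def by simp
qed

lemma sum_odd: fixes z :: complex
  shows "(z^2 - 1) * (\<Sum>k=0..m. z^(2*k+1)) = z^(2*m+3) - z"
proof (induction m)
  case 0 then show ?case by (simp add: algebra_simps power2_eq_square power3_eq_cube)
next
  case (Suc m)
  define S where "S = (\<Sum>k=0..m. z^(2*k+1))"
  have ee: "2*Suc m + 1 = 2*m+3" by simp
  have "(\<Sum>k=0..Suc m. z^(2*k+1)) = S + z^(2*m+3)" unfolding S_def sum.atLeast0_atMost_Suc ee ..
  moreover have "(z^2-1) * (S + z^(2*m+3)) = (z^2-1)*S + (z^2-1)*z^(2*m+3)" by (simp add: algebra_simps)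
  moreover have "(z^2-1)*z^(2*m+3) = z^(2*Suc m+3) - z^(2*m+3)"
  proof -
    have "2*Suc m+3 = 2 + (2*m+3)" by simp
    then have "z^(2*Suc m+3) = z^2*z^(2*m+3)" by (simp only: power_add)
    then show ?thesis by (simp add: left_diff_distrib)
  qed
  ultimately show ?case using Suc unfolding S_def by simp
qed

lemma pfac: fixes z \<rho> :: complex assumes n1: "n \<ge> 1"
  shows "(z^2 - 1) * p2n n \<rho> z = s_poly n \<rho> z * c_poly n \<rho> z"
proof -
  obtain m where n: "n = m + 1" using n1 by (metis add.commute le_add_diff_inverse)
  define P where "P = z^n"
  have a: "z^(2*n) = P*P" unfolding P_def by (simp add: mult_2 power_add)
  have "2*m+2 = n+n" "2*m+3 = n+n+1" using n by simp_all
  then have a2: "z^(2*m+2) = P*P" and a3: "z^(2*m+3) = P*P*z" unfolding P_def by (simp_all only: power_add power_one_right)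
  have b: "(z^2 - 1) * (\<Sum>k=1..n-1. z^(2*k)) = P*P - z^2"
    using sum_even[of z m] unfolding a2 by (simp add: n)
  have c: "(z^2 - 1) * (\<Sum>k=0..n-1. z^(2*k+1)) = P*P*z - z"
    using sum_odd[of z m] unfolding a3 by (simp add: n)
  have "(z^2 - 1) * p2n n \<rho> z = (z^2-1) * z^(2*n) + (1 + \<rho>^2) * ((z^2 - 1) * (\<Sum>k=1..n-1. z^(2*k)))
      - 2 * \<rho> * ((z^2 - 1) * (\<Sum>k=0..n-1. z^(2*k+1))) + (z^2 - 1)"
    unfolding p2n_def by (simp add: algebra_simps)
  also have "\<dots> = (z^2-1) * (P*P) + (1 + \<rho>^2) * (P*P - z^2) - 2 * \<rho> * (P*P*z - z) + (z^2 - 1)"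
    unfolding a b c ..
  also have "\<dots> = (P*z - \<rho>*P + \<rho>*z - 1) * (P*z - \<rho>*P - \<rho>*z + 1)"
    by (simp add: algebra_simps power2_eq_square)
  also have "\<dots> = s_poly n \<rho> z * c_poly n \<rho> z"
    unfolding s_poly_def c_poly_def P_def by (simp add: mult.commute)
  finally show ?thesis .
qed

lemma p_one: fixes \<rho> :: complex assumes n1: "n \<ge> 1"
  shows "p2n n \<rho> 1 = (\<rho> - 1) * (of_nat (n-1) * \<rho> - of_nat (n+1))"
proof -
  have "p2n n \<rho> 1 = 2 + (1 + \<rho>^2) * of_nat (n-1) - 2 * \<rho> * of_nat n"
    unfolding p2n_def using n1 by simp
  also have "\<dots> = (\<rho> - 1) * (of_nat (n-1) * \<rho> - of_nat (n+1))"
    using n1 by (simp add: of_nat_diff algebra_simps power2_eq_square)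
  finally show ?thesis .
qed

lemma p_mone: fixes \<rho> :: complex assumes n1: "n \<ge> 1"
  shows "p2n n \<rho> (-1) = (\<rho> + 1) * (of_nat (n-1) * \<rho> + of_nat (n+1))"
proof -
  have "p2n n \<rho> (-1) = 2 + (1 + \<rho>^2) * of_nat (n-1) + 2 * \<rho> * of_nat n"
    unfolding p2n_def using n1 by (simp add: power_mult)
  also have "\<dots> = (\<rho> + 1) * (of_nat (n-1) * \<rho> + of_nat (n+1))"
    using n1 by (simp add: of_nat_diff algebra_simps power2_eq_square)
  finally show ?thesis .
qed


lemma eigval_cos: fixes \<mu> \<rho> :: complex
  shows "Lf \<rho> (exp (\<i>*\<mu>)) = (1 - \<rho>^2) / (1 - 2 * \<rho> * cos \<mu> + \<rho>^2)"
proof -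
  define z where "z = exp (\<i>*\<mu>)"
  have z0: "z \<noteq> 0" unfolding z_def by simp
  have c: "cos \<mu> = (z + inverse z) / 2" unfolding my_cos_exp z_def by (simp add: exp_minus)
  have "1 - 2 * \<rho> * cos \<mu> + \<rho>^2 = ((z - \<rho>) * (1 - \<rho> * z)) / z"
    unfolding c using z0 by (simp add: field_simps power2_eq_square)
  then show ?thesis unfolding Lf_def z_def[symmetric] by simp
qed

lemma eigval_sin: fixes \<mu> \<rho> e :: complex
  defines "z \<equiv> exp (\<i>*\<mu>)"
  assumes z2: "z^2 \<noteq> 1" and zr: "z \<noteq> \<rho>" and rz: "1 - \<rho>*z \<noteq> 0"
    and h: "z^n * (z - \<rho>) = e * (1 - \<rho>*z)" and ee: "e*e = 1"
  shows "Lf \<rho> z = - e * (sin (of_nat n * \<mu>) / sin \<mu>)"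
proof -
  define P where "P = z^n"
  have z0: "z \<noteq> 0" unfolding z_def by simp
  have P0: "P \<noteq> 0" unfolding P_def using z0 by simp
  have zi: "z - inverse z \<noteq> 0" using z2 z0 by (auto simp: field_simps power2_eq_square)
  have e1: "\<i> * (of_nat n * \<mu>) = of_nat n * (\<i> * \<mu>)" by simp
  have e2: "-(\<i> * (of_nat n * \<mu>)) = of_nat n * (-(\<i> * \<mu>))" by simp
  have sn: "sin (of_nat n * \<mu>) = (P - inverse P) / (2*\<i>)"
    unfolding my_sin_exp e1 e2 exp_of_nat_mult P_def z_def by (simp add: exp_minus power_inverse exp_of_nat_mult)
  have s1: "sin \<mu> = (z - inverse z) / (2*\<i>)"
    unfolding my_sin_exp z_def by (simp add: exp_minus)
  have r: "sin (of_nat n * \<mu>) / sin \<mu> = (P - inverse P) / (z - inverse z)"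
    unfolding sn s1 by simp
  also have "\<dots> = ((P*P - 1) * z) / (P * (z*z - 1))"
    using P0 z0 zi by (simp add: field_simps)
  finally have r: "sin (of_nat n * \<mu>) / sin \<mu> = ((P*P - 1) * z) / (P * (z*z - 1))" .
  define hh where "hh = P * (z - \<rho>) - e * (1 - \<rho>*z)"
  have hh0: "hh = 0" unfolding hh_def P_def using h by simp
  have key0: "(1-\<rho>^2)*P*(z^2-1) + e*(P^2-1)*(z-\<rho>)*(1-\<rho>*z)
     = hh*(e*P*(1-\<rho>*z) + (z-\<rho>)) + (e*e-1)*P*(1-\<rho>*z)^2"
    unfolding hh_def by (simp add: algebra_simps power2_eq_square)
  have key: "(1-\<rho>^2)*P*(z^2-1) + e*(P^2-1)*(z-\<rho>)*(1-\<rho>*z) = 0"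
    unfolding key0 hh0 using ee by simp
  have zz: "z*z - 1 \<noteq> 0" using z2 by (simp add: power2_eq_square)
  define D where "D = (z - \<rho>) * (1 - \<rho> * z)"
  define Q where "Q = P * (z*z - 1)"
  have D0: "D \<noteq> 0" unfolding D_def using zr rz by simp
  have Q0: "Q \<noteq> 0" unfolding Q_def using P0 zz by simp
  have k2: "z * (1 - \<rho>^2) * Q = (- e * ((P*P - 1) * z)) * D"
  proof -
    have "z * (1 - \<rho>^2) * Q - (- e * ((P*P - 1) * z)) * D
       = z * ((1-\<rho>^2)*P*(z^2-1) + e*(P^2-1)*(z-\<rho>)*(1-\<rho>*z))"
      unfolding Q_def D_def by (simp add: algebra_simps power2_eq_square)
    then show ?thesis unfolding key mult_zero_right right_minus_eq .
  qed
  have "Lf \<rho> z = z * (1 - \<rho>^2) / D" unfolding Lf_def D_def ..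
  also have "\<dots> = (- e * ((P*P - 1) * z)) / Q" by (rule iffD2[OF frac_eq_eq[OF D0 Q0]]) (rule k2)
  also have "\<dots> = - e * (sin (of_nat n * \<mu>) / sin \<mu>)" unfolding r Q_def by simp
  finally show ?thesis .
qed


lemma vec_nonzero:
  fixes z e C :: complex
  assumes n2: "n \<ge> 2" and z2: "z^2 \<noteq> 1" and z0: "z \<noteq> 0" and C0: "C \<noteq> 0" and ee: "e*e = 1"
  shows "vec n (\<lambda>j. C * (z^j - e * z^(n-1) * (inverse z)^j)) \<noteq> 0\<^sub>v n"
proof
  assume a: "vec n (\<lambda>j. C * (z^j - e * z^(n-1) * (inverse z)^j)) = 0\<^sub>v n"
  have "vec n (\<lambda>j. C * (z^j - e * z^(n-1) * (inverse z)^j)) $ 0 = 0\<^sub>v n $ 0" using a by simp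
  then have "C * (1 - e * z^(n-1)) = 0" using n2 by simp
  then have b: "e * z^(n-1) = 1" using C0 by simp
  have "vec n (\<lambda>j. C * (z^j - e * z^(n-1) * (inverse z)^j)) $ 1 = 0\<^sub>v n $ 1" using a by simp
  then have "C * (z - e * z^(n-1) * inverse z) = 0" using n2 by simp
  then have "z - inverse z = 0" using C0 b by simp
  then have "z^2 = 1" using z0 by (simp add: field_simps power2_eq_square)
  then show False using z2 by simp
qed

lemma z_ok:
  fixes z e \<rho> :: complex
  assumes z0: "z \<noteq> 0" and r2: "\<rho>^2 \<noteq> 1" and e0: "e \<noteq> 0" and h: "z^n * (z - \<rho>) = e * (1 - \<rho>*z)"
  shows "z \<noteq> \<rho>" "1 - \<rho>*z \<noteq> 0"
proof -
  show zr: "z \<noteq> \<rho>"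
  proof
    assume "z = \<rho>"
    then have "e * (1 - \<rho>^2) = 0" using h by (simp add: power2_eq_square)
    then show False using e0 r2 by simp
  qed
  show "1 - \<rho>*z \<noteq> 0"
  proof
    assume "1 - \<rho>*z = 0"
    then have "z^n * (z - \<rho>) = 0" using h by simp
    then show False using z0 zr by simp
  qed
qed

lemma eig_final:
  fixes \<mu> \<rho> e C :: complex
  assumes n2: "n \<ge> 2" and z2: "exp (\<i>*\<mu>)^2 \<noteq> 1" and r2: "\<rho>^2 \<noteq> 1" and ee: "e*e = 1"
    and C0: "C \<noteq> 0"
    and h: "exp (\<i>*\<mu>)^n * (exp (\<i>*\<mu>) - \<rho>) = e * (1 - \<rho>*exp (\<i>*\<mu>))"
  shows "eigenvector (KMS n \<rho>) (vec n (\<lambda>j. C * (exp (\<i>*\<mu>)^j - e * exp (\<i>*\<mu>)^(n-1) * (inverse (exp (\<i>*\<mu>)))^j)))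
           (zero_eigval \<rho> (exp (\<i>*\<mu>)))"
    and "zero_eigval \<rho> (exp (\<i>*\<mu>)) = - e * (sin (of_nat n * \<mu>) / sin \<mu>)"
proof -
  define z where "z = exp (\<i>*\<mu>)"
  have z0: "z \<noteq> 0" unfolding z_def by simp
  have e0: "e \<noteq> 0" using ee by auto
  have zr: "z \<noteq> \<rho>" and rz: "1 - \<rho>*z \<noteq> 0" using z_ok[OF z0 r2 e0 h[folded z_def]] by auto
  have zl: "zero_eigval \<rho> z = Lf \<rho> z" unfolding zero_eigval_def Lf_def ..
  show "eigenvector (KMS n \<rho>) (vec n (\<lambda>j. C * (exp (\<i>*\<mu>)^j - e * exp (\<i>*\<mu>)^(n-1) * (inverse (exp (\<i>*\<mu>)))^j)))
           (zero_eigval \<rho> (exp (\<i>*\<mu>)))"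
    unfolding eigenvector_def z_def[symmetric] zl
  proof (intro conjI)
    show "vec n (\<lambda>j. C * (z ^ j - e * z ^ (n - 1) * inverse z ^ j)) \<in> carrier_vec (dim_row (KMS n \<rho>))"
      unfolding KMS_def by simp
    show "vec n (\<lambda>j. C * (z ^ j - e * z ^ (n - 1) * inverse z ^ j)) \<noteq> 0\<^sub>v (dim_row (KMS n \<rho>))"
      unfolding KMS_def using vec_nonzero[OF n2 z2[folded z_def] z0 C0 ee] by simp
    show "KMS n \<rho> *\<^sub>v vec n (\<lambda>j. C * (z ^ j - e * z ^ (n - 1) * inverse z ^ j)) =
      Lf \<rho> z \<cdot>\<^sub>v vec n (\<lambda>j. C * (z ^ j - e * z ^ (n - 1) * inverse z ^ j))"
      by (rule eig_general) (use n2 z0 zr rz h ee in \<open>auto simp: z_def\<close>)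
  qed
  show "zero_eigval \<rho> (exp (\<i>*\<mu>)) = - e * (sin (of_nat n * \<mu>) / sin \<mu>)"
    using eigval_sin[of \<mu> \<rho> n e, OF z2 zr[unfolded z_def] rz[unfolded z_def] h ee] zl
    unfolding z_def by simp
qed



theorem theorem4p1:
  fixes n :: nat and \<rho> z \<mu> :: complex
  assumes n2: "n \<ge> 2"
    and rho: "\<rho> \<notin> {- (of_nat (n+1) / of_nat (n-1)), -1, 1, of_nat (n+1) / of_nat (n-1)}"
    and z0: "z \<noteq> 0"
    and zmu: "z = exp (\<i> * \<mu>)"
  shows
   "(type1_zero n \<rho> z \<longleftrightarrow>
       z \<noteq> 1 \<and> z \<noteq> -1 \<and>
       sin (\<mu> * of_nat (n+1) / 2) - \<rho> * sin (\<mu> * of_nat (n-1) / 2) = 0)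
    \<and> (type1_zero n \<rho> z \<longrightarrow>
       zero_eigval \<rho> z = (1 - \<rho>^2) / (1 - 2 * \<rho> * cos \<mu> + \<rho>^2)
     \<and> zero_eigval \<rho> z = - (sin (of_nat n * \<mu>) / sin \<mu>)
     \<and> eigenvector (KMS n \<rho>)
         (vec n (\<lambda>j. sin (\<mu> * (of_nat j - (of_nat n - 1) / 2)))) (zero_eigval \<rho> z))
    \<and> (type2_zero n \<rho> z \<longleftrightarrow>
       z \<noteq> 1 \<and> z \<noteq> -1 \<and>
       cos (\<mu> * of_nat (n+1) / 2) - \<rho> * cos (\<mu> * of_nat (n-1) / 2) = 0)
    \<and> (type2_zero n \<rho> z \<longrightarrow>
       zero_eigval \<rho> z = (1 - \<rho>^2) / (1 - 2 * \<rho> * cos \<mu> + \<rho>^2)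
     \<and> zero_eigval \<rho> z = sin (of_nat n * \<mu>) / sin \<mu>
     \<and> eigenvector (KMS n \<rho>)
         (vec n (\<lambda>j. cos (\<mu> * (of_nat j - (of_nat n - 1) / 2)))) (zero_eigval \<rho> z))"
  proof -
  have n1: "n \<ge> 1" using n2 by simp
  have z0': "exp (\<i>*\<mu>) \<noteq> 0" by simp
  have nm0: "(of_nat (n-1) :: complex) \<noteq> 0" using n2 by simp
  have r1: "\<rho> \<noteq> 1" "\<rho> \<noteq> -1" using rho by auto
  have r2: "\<rho>^2 \<noteq> 1" using r1 by (simp add: power2_eq_1_iff)
  have p1: "p2n n \<rho> 1 \<noteq> 0"
  proof
    assume "p2n n \<rho> 1 = 0"
    then have "of_nat (n-1) * \<rho> - of_nat (n+1) = 0" using r1 unfolding p_one[OF n1] by simp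
    then have "\<rho> = of_nat (n+1) / of_nat (n-1)" using nm0 by (simp add: field_simps)
    then show False using rho by simp
  qed
  have pm1: "p2n n \<rho> (-1) \<noteq> 0"
  proof
    assume "p2n n \<rho> (-1) = 0"
    moreover have r3: "\<rho> + 1 \<noteq> 0"
    proof
      assume "\<rho> + 1 = 0"
      then have "\<rho> = -1" by (simp add: eq_neg_iff_add_eq_0)
      then show False using r1 by simp
    qed
    ultimately have "of_nat (n-1) * \<rho> + of_nat (n+1) = 0" unfolding p_mone[OF n1] by simp
    then have "\<rho> = - (of_nat (n+1) / of_nat (n-1))" using nm0 by (simp add: field_simps)
    then show False using rho by simp
  qed
  have zz: "(z \<noteq> 1 \<and> z \<noteq> -1) \<longleftrightarrow> z^2 \<noteq> 1" by (simp add: power2_eq_1_iff)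
  have znz: "z^n * z \<noteq> 0" using z0 by simp
  have T1: "type1_zero n \<rho> z \<longleftrightarrow> z^2 \<noteq> 1 \<and> s_poly n \<rho> z = 0"
  proof
    assume t: "type1_zero n \<rho> z"
    then have "p2n n \<rho> z = 0" "s_poly n \<rho> z = 0" unfolding type1_zero_def by auto
    moreover have "z \<noteq> 1 \<and> z \<noteq> -1" using p1 pm1 \<open>p2n n \<rho> z = 0\<close> by auto
    ultimately show "z^2 \<noteq> 1 \<and> s_poly n \<rho> z = 0" using zz by simp
  next
    assume a: "z^2 \<noteq> 1 \<and> s_poly n \<rho> z = 0"
    then have "(z^2 - 1) * p2n n \<rho> z = 0" unfolding pfac[OF n1] by simp
    then have "p2n n \<rho> z = 0" using a by simp
    moreover have "s_poly n \<rho> (inverse z) = 0" unfolding s_inv[OF z0] using a by simp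
    ultimately show "type1_zero n \<rho> z" unfolding type1_zero_def using a by simp
  qed
  have T2: "type2_zero n \<rho> z \<longleftrightarrow> z^2 \<noteq> 1 \<and> c_poly n \<rho> z = 0"
  proof
    assume t: "type2_zero n \<rho> z"
    then have "p2n n \<rho> z = 0" "c_poly n \<rho> z = 0" unfolding type2_zero_def by auto
    moreover have "z \<noteq> 1 \<and> z \<noteq> -1" using p1 pm1 \<open>p2n n \<rho> z = 0\<close> by auto
    ultimately show "z^2 \<noteq> 1 \<and> c_poly n \<rho> z = 0" using zz by simp
  next
    assume a: "z^2 \<noteq> 1 \<and> c_poly n \<rho> z = 0"
    then have "(z^2 - 1) * p2n n \<rho> z = 0" unfolding pfac[OF n1] by simp
    then have "p2n n \<rho> z = 0" using a by simp
    moreover have "c_poly n \<rho> (inverse z) = 0" unfolding c_inv[OF z0] using a by simp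
    ultimately show "type2_zero n \<rho> z" unfolding type2_zero_def using a by simp
  qed
  have hs: "s_poly n \<rho> z = 0 \<longleftrightarrow> z^n * (z - \<rho>) = 1 * (1 - \<rho>*z)"
    unfolding s_poly_def by (auto simp: algebra_simps)
  have hc: "c_poly n \<rho> z = 0 \<longleftrightarrow> z^n * (z - \<rho>) = (-1) * (1 - \<rho>*z)"
    unfolding c_poly_def by (auto simp: algebra_simps)
  have C1: "exp (-(\<i>*\<mu>/2)) ^ (n-1) / (2*\<i>) \<noteq> 0" by simp
  have C2: "exp (-(\<i>*\<mu>/2)) ^ (n-1) / 2 \<noteq> 0" by simp
  show ?thesis
  proof (intro conjI impI)
    show "type1_zero n \<rho> z \<longleftrightarrow> z \<noteq> 1 \<and> z \<noteq> -1 \<and>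
       sin (\<mu> * of_nat (n+1) / 2) - \<rho> * sin (\<mu> * of_nat (n-1) / 2) = 0"
      unfolding T1 sin_cond[OF n1] zmu[symmetric] using zz by blast
    show "type2_zero n \<rho> z \<longleftrightarrow> z \<noteq> 1 \<and> z \<noteq> -1 \<and>
       cos (\<mu> * of_nat (n+1) / 2) - \<rho> * cos (\<mu> * of_nat (n-1) / 2) = 0"
      unfolding T2 cos_cond[OF n1] zmu[symmetric] using zz by blast
    show "zero_eigval \<rho> z = (1 - \<rho>^2) / (1 - 2 * \<rho> * cos \<mu> + \<rho>^2)"
      unfolding zero_eigval_def zmu using eigval_cos[of \<rho> \<mu>] unfolding Lf_def .
    then show "zero_eigval \<rho> z = (1 - \<rho>^2) / (1 - 2 * \<rho> * cos \<mu> + \<rho>^2)" .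
  next
    assume t: "type1_zero n \<rho> z"
    then have z2: "exp (\<i>*\<mu>)^2 \<noteq> 1" and h: "exp (\<i>*\<mu>)^n * (exp (\<i>*\<mu>) - \<rho>) = 1 * (1 - \<rho>*exp (\<i>*\<mu>))"
      using T1 hs zmu by auto
    note E = eig_final[OF n2 z2 r2 _ C1 h]
    show "zero_eigval \<rho> z = - (sin (of_nat n * \<mu>) / sin \<mu>)" using E(2) zmu by simp
    show "eigenvector (KMS n \<rho>) (vec n (\<lambda>j. sin (\<mu> * (of_nat j - (of_nat n - 1) / 2)))) (zero_eigval \<rho> z)"
      unfolding y_sin[OF n1] zmu using E(1) by simp
  next
    assume t: "type2_zero n \<rho> z"
    then have z2: "exp (\<i>*\<mu>)^2 \<noteq> 1" and h: "exp (\<i>*\<mu>)^n * (exp (\<i>*\<mu>) - \<rho>) = (-1) * (1 - \<rho>*exp (\<i>*\<mu>))"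
      using T2 hc zmu by auto
    note E = eig_final[OF n2 z2 r2 _ C2 h]
    show "zero_eigval \<rho> z = sin (of_nat n * \<mu>) / sin \<mu>" using E(2) zmu by simp
    show "eigenvector (KMS n \<rho>) (vec n (\<lambda>j. cos (\<mu> * (of_nat j - (of_nat n - 1) / 2)))) (zero_eigval \<rho> z)"
      unfolding y_cos[OF n1] zmu using E(1) by simp
  qed
qed

end
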